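(* Let $J$ be an instance of TAP and let $s_1,s_2,\dots,s_m$ be an enumeration of all schools (a master list of schools) such that, for every applicant $a$, the preference list of $a$ is the restriction of the order $s_1,\dots,s_m$ to $S(a)$. Then $J$ admits exactly one stable matching, namely the matching $\mathcal M$ produced by the following procedure (Dual Serial Dictatorship): start with $\mathcal M=\emptyset$; for $j=1,2,\dots,m$ in turn, go through the preference list $a_{i_1},\dots,a_{i_\ell}$ of $s_j$ in order and, for $r=1,\dots,\ell$, if $a_{i_r}$ is currently unassigned in $\mathcal M$ and $|\mathcal M_p(s_j)|<c_p(s_j)$ for both subjects $p\in\mathbf p(a_{i_r})$, add $(a_{i_r},s_j)$ to $\mathcal M$.
   Context: An instance of the Teachers Assignment Problem (TAP) consists of a finite set $A$ of applicants, a finite set $S$ of schools and a finite set $P$ of subjects. Each applicant $a\in A$ has a type $\mathbf p(a)=\{p_1(a),p_2(a)\}\subseteq P$ consisting of two distinct subjects, a set $S(a)\subseteq S$ of acceptable schools, and a strict linear order (her preference list) on $S(a)$. Each school $s$ has a partial capacity $c_p(s)\in\mathbb N$ for each subject $p\in P$, and a strict linear order (its preference list) on the set of applicants $a$ with $s\in S(a)$. An assignment $\mathcal M$ is a set of pairs $(a,s)$ with $s\in S(a)$ such that each applicant lies in at most one pair; write $\mathcal M(a)=s$ if $(a,s)\in\mathcal M$ and $\mathcal M(a)=\emptyset$ if $a$ is in no pair (unassigned). For a school $s$ and subjects $p,r$ let $\mathcal M_p(s)=\{a:(a,s)\in\mathcal M,\ p\in\mathbf p(a)\}$ and $\mathcal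 M_{p,r}(s)=\{a:(a,s)\in\mathcal M,\ \mathbf p(a)=\{p,r\}\}$. An assignment is a matching if $|\mathcal M_p(s)|\le c_p(s)$ for all $s\in S$, $p\in P$. School $s$ is undersubscribed in $p$ if $|\mathcal M_p(s)|<c_p(s)$. A pair $(a,s)$ with $s\in S(a)$ and $\mathbf p(a)=\{p_1,p_2\}$ blocks a matching $\mathcal M$ if ($a$ is unassigned or $a$ prefers $s$ to $\mathcal M(a)$) and at least one of: (i) $s$ is undersubscribed in both $p_1$ and $p_2$; (ii) for some $i\in\{1,2\}$, $s$ is undersubscribed in $p_i$ and $s$ prefers $a$ to some applicant in $\mathcal M_{p_{3-i}}(s)$; (iii) $s$ prefers $a$ to some applicant in $\mathcal M_{p_1,p_2}(s)$; (iv) $s$ prefers $a$ to two distinct applicants $a_1\in\mathcal M_{p_1}(s)$ and $a_2\in\mathcal M_{p_2}(s)$. A matching is stable if no pair blocks it. *)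

theory Defs
  imports Main
begin

text \<open>Applicants of type 'a, schools of type 's, subjects of type 'p.
  An instance consists of: finite sets A (applicants), S (schools), P (subjects);
  ptype a = the type p(a) (a 2-element subset of P); acc a = S(a);
  apref a s s' : applicant a prefers s to s';
  cap s p = c_p(s); spref s b b' : school s prefers b to b'.\<close>

definition strict_lin_on :: "'x set \<Rightarrow> ('x \<Rightarrow> 'x \<Rightarrow> bool) \<Rightarrow> bool" where
  "strict_lin_on X R \<longleftrightarrow>
     (\<forall>x\<in>X. \<not> R x x) \<and>
     (\<forall>x\<in>X. \<forall>y\<in>X. \<forall>z\<in>X. R x y \<longrightarrow> R y z \<longrightarrow> R x z) \<and>
     (\<forall>x\<in>X. \<forall>y\<in>X. x \<noteq> y \<longrightarrow> R x y \<or> R y x)"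

definition tap_instance ::
  "'a set \<Rightarrow> 's set \<Rightarrow> 'p set \<Rightarrow> ('a \<Rightarrow> 'p set) \<Rightarrow> ('a \<Rightarrow> 's set)
   \<Rightarrow> ('a \<Rightarrow> 's \<Rightarrow> 's \<Rightarrow> bool) \<Rightarrow> ('s \<Rightarrow> 'p \<Rightarrow> nat) \<Rightarrow> ('s \<Rightarrow> 'a \<Rightarrow> 'a \<Rightarrow> bool) \<Rightarrow> bool" where
  "tap_instance A S P ptype acc apref cap spref \<longleftrightarrow>
     finite A \<and> finite S \<and> finite P \<and>
     (\<forall>a\<in>A. (\<exists>p1 p2. p1 \<noteq> p2 \<and> ptype a = {p1, p2}) \<and> ptype a \<subseteq> P) \<and>
     (\<forall>a\<in>A. acc a \<subseteq> S \<and> strict_lin_on (acc a) (apref a)) \<and>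
     (\<forall>s\<in>S. strict_lin_on {a\<in>A. s \<in> acc a} (spref s))"

definition Msub :: "('a \<Rightarrow> 'p set) \<Rightarrow> ('a \<times> 's) set \<Rightarrow> 's \<Rightarrow> 'p \<Rightarrow> 'a set" where
  "Msub ptype M s p = {a. (a, s) \<in> M \<and> p \<in> ptype a}"

definition Msub2 :: "('a \<Rightarrow> 'p set) \<Rightarrow> ('a \<times> 's) set \<Rightarrow> 's \<Rightarrow> 'p \<Rightarrow> 'p \<Rightarrow> 'a set" where
  "Msub2 ptype M s p r = {a. (a, s) \<in> M \<and> ptype a = {p, r}}"

definition unassigned :: "('a \<times> 's) set \<Rightarrow> 'a \<Rightarrow> bool" where
  "unassigned M a \<longleftrightarrow> (\<forall>s. (a, s) \<notin> M)"

definition undersub :: "('a \<Rightarrow> 'p set) \<Rightarrow> ('s \<Rightarrow> 'p \<Rightarrow> nat) \<Rightarrow> ('a \<times> 's) set \<Rightarrow> 's \<Rightarrow> 'p \<Rightarrow> bool" where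
  "undersub ptype cap M s p \<longleftrightarrow> card (Msub ptype M s p) < cap s p"

definition is_assignment :: "'a set \<Rightarrow> ('a \<Rightarrow> 's set) \<Rightarrow> ('a \<times> 's) set \<Rightarrow> bool" where
  "is_assignment A acc M \<longleftrightarrow>
     (\<forall>(a, s)\<in>M. a \<in> A \<and> s \<in> acc a) \<and>
     (\<forall>a s s'. (a, s) \<in> M \<longrightarrow> (a, s') \<in> M \<longrightarrow> s = s')"

definition is_matching ::
  "'a set \<Rightarrow> 's set \<Rightarrow> 'p set \<Rightarrow> ('a \<Rightarrow> 'p set) \<Rightarrow> ('a \<Rightarrow> 's set) \<Rightarrow> ('s \<Rightarrow> 'p \<Rightarrow> nat)
   \<Rightarrow> ('a \<times> 's) set \<Rightarrow> bool" where
  "is_matching A S P ptype acc cap M \<longleftrightarrow>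
     is_assignment A acc M \<and> (\<forall>s\<in>S. \<forall>p\<in>P. card (Msub ptype M s p) \<le> cap s p)"

definition blocks ::
  "'a set \<Rightarrow> ('a \<Rightarrow> 'p set) \<Rightarrow> ('a \<Rightarrow> 's set) \<Rightarrow> ('a \<Rightarrow> 's \<Rightarrow> 's \<Rightarrow> bool) \<Rightarrow> ('s \<Rightarrow> 'p \<Rightarrow> nat)
   \<Rightarrow> ('s \<Rightarrow> 'a \<Rightarrow> 'a \<Rightarrow> bool) \<Rightarrow> ('a \<times> 's) set \<Rightarrow> 'a \<Rightarrow> 's \<Rightarrow> bool" where
  "blocks A ptype acc apref cap spref M a s \<longleftrightarrow>
     a \<in> A \<and> s \<in> acc a \<and>
     (unassigned M a \<or> (\<exists>s'. (a, s') \<in> M \<and> apref a s s')) \<and>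
     (\<exists>p1 p2. p1 \<noteq> p2 \<and> ptype a = {p1, p2} \<and>
        ((undersub ptype cap M s p1 \<and> undersub ptype cap M s p2) \<or>
         (undersub ptype cap M s p1 \<and> (\<exists>b\<in>Msub ptype M s p2. spref s a b)) \<or>
         (undersub ptype cap M s p2 \<and> (\<exists>b\<in>Msub ptype M s p1. spref s a b)) \<or>
         (\<exists>b\<in>Msub2 ptype M s p1 p2. spref s a b) \<or>
         (\<exists>a1\<in>Msub ptype M s p1. \<exists>a2\<in>Msub ptype M s p2.
             a1 \<noteq> a2 \<and> spref s a a1 \<and> spref s a a2)))"

definition stable ::
  "'a set \<Rightarrow> 's set \<Rightarrow> 'p set \<Rightarrow> ('a \<Rightarrow> 'p set) \<Rightarrow> ('a \<Rightarrow> 's set)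
   \<Rightarrow> ('a \<Rightarrow> 's \<Rightarrow> 's \<Rightarrow> bool) \<Rightarrow> ('s \<Rightarrow> 'p \<Rightarrow> nat) \<Rightarrow> ('s \<Rightarrow> 'a \<Rightarrow> 'a \<Rightarrow> bool)
   \<Rightarrow> ('a \<times> 's) set \<Rightarrow> bool" where
  "stable A S P ptype acc apref cap spref M \<longleftrightarrow>
     is_matching A S P ptype acc cap M \<and>
     (\<forall>a s. \<not> blocks A ptype acc apref cap spref M a s)"

fun dsd_school :: "('a \<Rightarrow> 'p set) \<Rightarrow> ('s \<Rightarrow> 'p \<Rightarrow> nat) \<Rightarrow> 's \<Rightarrow> 'a list
    \<Rightarrow> ('a \<times> 's) set \<Rightarrow> ('a \<times> 's) set" where
  "dsd_school ptype cap s [] M = M"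
| "dsd_school ptype cap s (a # as) M =
     dsd_school ptype cap s as
       (if unassigned M a \<and> (\<forall>p\<in>ptype a. card (Msub ptype M s p) < cap s p)
        then insert (a, s) M else M)"

text \<open>L s is the preference list of school s; ms is the master list of schools.\<close>
definition dsd :: "('a \<Rightarrow> 'p set) \<Rightarrow> ('s \<Rightarrow> 'p \<Rightarrow> nat) \<Rightarrow> ('s \<Rightarrow> 'a list) \<Rightarrow> 's list
    \<Rightarrow> ('a \<times> 's) set" where
  "dsd ptype cap L ms = foldl (\<lambda>M s. dsd_school ptype cap s (L s) M) {} ms"

end

theory Submission
  imports Defs
begin



lemma school_char:
  assumes "distinct xs" "sorted_wrt R xs"
    "\<forall>a\<in>set xs. \<forall>b\<in>set xs. R a b \<longrightarrow> \<not> R b a"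
    "\<forall>b. (b,s)\<in>M0 \<longrightarrow> b\<notin>set xs \<and> (\<forall>a\<in>set xs. R b a)"
  shows "dsd_school ptype cap s xs M0 = M0 \<union> {(a,s)|a. a\<in>set xs \<and> unassigned M0 a \<and>
     (\<forall>p\<in>ptype a. card {b. (b,s)\<in>dsd_school ptype cap s xs M0 \<and> p\<in>ptype b \<and> R b a} < cap s p)}"
  using assms
proof (induction xs arbitrary: M0)
  case Nil
  then show ?case by simp
next
  case (Cons x xs)
  define c where "c = (unassigned M0 x \<and> (\<forall>p\<in>ptype x. card (Msub ptype M0 s p) < cap s p))"
  define M1 where "M1 = (if c then insert (x, s) M0 else M0)"
  define M where "M = dsd_school ptype cap s (x#xs) M0"
  have MM1: "M = dsd_school ptype cap s xs M1" unfolding M_def M1_def c_def by simp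
  have h1: "\<forall>b. (b,s)\<in>M1 \<longrightarrow> b\<notin>set xs \<and> (\<forall>a\<in>set xs. R b a)"
    using Cons.prems unfolding M1_def by auto
  have IH: "M = M1 \<union> {(a,s)|a. a\<in>set xs \<and> unassigned M1 a \<and>
     (\<forall>p\<in>ptype a. card {b. (b,s)\<in>M \<and> p\<in>ptype b \<and> R b a} < cap s p)}"
    using Cons.IH[of M1] Cons.prems h1 MM1 by auto
  have M1M: "M1 \<subseteq> M" using IH by blast
  have xx: "\<not> R x x" using Cons.prems(3) by auto
  have key: "Msub ptype M0 s p = {b. (b,s)\<in>M \<and> p\<in>ptype b \<and> R b x}" for p
  proof (rule set_eqI, rule iffI)
    fix b assume "b \<in> Msub ptype M0 s p"
    then show "b \<in> {b. (b,s)\<in>M \<and> p\<in>ptype b \<and> R b x}"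
      using Cons.prems(4) M1M unfolding Msub_def M1_def by auto
  next
    fix b assume b: "b \<in> {b. (b,s)\<in>M \<and> p\<in>ptype b \<and> R b x}"
    then have "(b,s) \<in> M" "R b x" "p \<in> ptype b" by auto
    moreover have "b \<notin> set xs"
    proof
      assume "b \<in> set xs"
      then have "R x b" using Cons.prems(2) by auto
      then show False using \<open>R b x\<close> Cons.prems(3) \<open>b \<in> set xs\<close> by auto
    qed
    ultimately show "b \<in> Msub ptype M0 s p"
      using IH xx unfolding Msub_def M1_def by (auto split: if_splits)
  qed
  have ua: "a \<in> set xs \<Longrightarrow> unassigned M1 a = unassigned M0 a" for a
    using Cons.prems(1) unfolding M1_def unassigned_def by auto
  have cx: "c = (unassigned M0 x \<and> (\<forall>p\<in>ptype x. card {b. (b,s)\<in>M \<and> p\<in>ptype b \<and> R b x} < cap s p))"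
    unfolding c_def key by simp
  show ?case
    unfolding M_def[symmetric]
    apply (subst IH)
    using ua cx unfolding M1_def by auto
qed


definition idx :: "'x list \<Rightarrow> 'x \<Rightarrow> nat" where
  "idx xs x = (LEAST i. i < length xs \<and> xs!i = x)"

lemma idx_props: "x \<in> set xs \<Longrightarrow> idx xs x < length xs \<and> xs ! idx xs x = x"
proof -
  assume "x \<in> set xs"
  then obtain i where "i < length xs" "xs!i = x" by (auto simp: in_set_conv_nth)
  then show ?thesis unfolding idx_def by (rule LeastI[of "\<lambda>i. i < length xs \<and> xs!i = x", OF conjI])
qed

lemma idx_nth: "distinct xs \<Longrightarrow> i < length xs \<Longrightarrow> idx xs (xs!i) = i"
  using idx_props[of "xs!i" xs] nth_eq_iff_index_eq by fastforce

lemma idx_inj: "x \<in> set xs \<Longrightarrow> y \<in> set xs \<Longrightarrow> idx xs x = idx xs y \<Longrightarrow> x = y"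
  using idx_props by metis

lemma idx_take: "distinct xs \<Longrightarrow> t \<in> set (take k xs) \<Longrightarrow> idx xs t < k"
proof -
  assume d: "distinct xs" and t: "t \<in> set (take k xs)"
  then obtain i where "i < length (take k xs)" "take k xs ! i = t" by (auto simp: in_set_conv_nth)
  then have "i < k" "i < length xs" "xs ! i = t" by auto
  then show ?thesis using idx_nth[OF d] by auto
qed




locale tapml =
  fixes A :: "'a set" and S :: "'s set" and P :: "'p set"
    and ptype :: "'a \<Rightarrow> 'p set" and acc :: "'a \<Rightarrow> 's set"
    and apref :: "'a \<Rightarrow> 's \<Rightarrow> 's \<Rightarrow> bool" and cap :: "'s \<Rightarrow> 'p \<Rightarrow> nat"
    and spref :: "'s \<Rightarrow> 'a \<Rightarrow> 'a \<Rightarrow> bool"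
    and ms :: "'s list" and L :: "'s \<Rightarrow> 'a list"
  assumes inst: "tap_instance A S P ptype acc apref cap spref"
    and ms_dist: "distinct ms" and ms_set: "set ms = S"
    and master: "\<forall>a\<in>A. \<forall>s\<in>acc a. \<forall>s'\<in>acc a.
                   apref a s s' \<longleftrightarrow> (\<exists>i j. i < j \<and> j < length ms \<and> ms ! i = s \<and> ms ! j = s')"
    and school_lists: "\<forall>s\<in>S. distinct (L s) \<and> set (L s) = {a\<in>A. s \<in> acc a}
                          \<and> sorted_wrt (spref s) (L s)"
begin

lemma finA: "finite A" using inst unfolding tap_instance_def by auto
lemma acc_S: "a \<in> A \<Longrightarrow> acc a \<subseteq> S" using inst unfolding tap_instance_def by auto
lemma ptype_P: "a \<in> A \<Longrightarrow> ptype a \<subseteq> P" using inst unfolding tap_instance_def by auto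
lemma ptype2: "a \<in> A \<Longrightarrow> \<exists>p1 p2. p1 \<noteq> p2 \<and> ptype a = {p1,p2}"
  using inst unfolding tap_instance_def by auto
lemma sp_lin: "s \<in> S \<Longrightarrow> strict_lin_on {a\<in>A. s \<in> acc a} (spref s)"
  using inst unfolding tap_instance_def by auto

lemma sp_irr: "s \<in> S \<Longrightarrow> a \<in> A \<Longrightarrow> s \<in> acc a \<Longrightarrow> \<not> spref s a a"
  using sp_lin unfolding strict_lin_on_def by auto

lemma sp_asym: "s \<in> S \<Longrightarrow> a \<in> A \<Longrightarrow> s \<in> acc a \<Longrightarrow> b \<in> A \<Longrightarrow> s \<in> acc b \<Longrightarrow>
   spref s a b \<Longrightarrow> \<not> spref s b a"
  using sp_lin[of s] unfolding strict_lin_on_def by blast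

lemma sp_total: "s \<in> S \<Longrightarrow> a \<in> A \<Longrightarrow> s \<in> acc a \<Longrightarrow> b \<in> A \<Longrightarrow> s \<in> acc b \<Longrightarrow>
   a \<noteq> b \<Longrightarrow> spref s a b \<or> spref s b a"
  using sp_lin[of s] unfolding strict_lin_on_def by blast

lemma apref_idx: "a \<in> A \<Longrightarrow> s \<in> acc a \<Longrightarrow> t \<in> acc a \<Longrightarrow> apref a t s \<longleftrightarrow> idx ms t < idx ms s"
proof -
  assume a: "a \<in> A" "s \<in> acc a" "t \<in> acc a"
  then have st: "s \<in> set ms" "t \<in> set ms" using acc_S ms_set by auto
  have "apref a t s \<longleftrightarrow> (\<exists>i j. i < j \<and> j < length ms \<and> ms ! i = t \<and> ms ! j = s)"
    using master a by blast
  also have "\<dots> \<longleftrightarrow> idx ms t < idx ms s"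
  proof
    assume "\<exists>i j. i < j \<and> j < length ms \<and> ms ! i = t \<and> ms ! j = s"
    then obtain i j where "i < j" "j < length ms" "ms ! i = t" "ms ! j = s" by blast
    then show "idx ms t < idx ms s" using idx_nth[OF ms_dist] by auto
  next
    assume "idx ms t < idx ms s"
    then show "\<exists>i j. i < j \<and> j < length ms \<and> ms ! i = t \<and> ms ! j = s"
      using idx_props[OF st(1)] idx_props[OF st(2)] by blast
  qed
  finally show ?thesis .
qed

lemma sp_pos: "s \<in> S \<Longrightarrow> a \<in> A \<Longrightarrow> s \<in> acc a \<Longrightarrow> b \<in> A \<Longrightarrow> s \<in> acc b \<Longrightarrow>
   spref s b a \<Longrightarrow> idx (L s) b < idx (L s) a"
proof (rule ccontr)
  assume s: "s \<in> S" and a: "a \<in> A" "s \<in> acc a" and b: "b \<in> A" "s \<in> acc b"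
    and ba: "spref s b a" and n: "\<not> idx (L s) b < idx (L s) a"
  have sl: "distinct (L s)" "set (L s) = {a\<in>A. s \<in> acc a}" "sorted_wrt (spref s) (L s)"
    using school_lists s by auto
  have ain: "a \<in> set (L s)" and bin: "b \<in> set (L s)" using sl a b by auto
  have "a \<noteq> b" using ba sp_irr s a by auto
  then have "idx (L s) a \<noteq> idx (L s) b" using idx_inj ain bin by metis
  then have lt: "idx (L s) a < idx (L s) b" using n by auto
  have "spref s (L s ! idx (L s) a) (L s ! idx (L s) b)"
    using sorted_wrt_nth_less[OF sl(3) lt] idx_props[OF bin] by blast
  then have "spref s a b" using idx_props[OF ain] idx_props[OF bin] by simp
  then show False using sp_asym[OF s a b] ba by blast
qed

definition G :: "('a \<times> 's) set \<Rightarrow> bool" where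
  "G M \<longleftrightarrow> M \<subseteq> {(a,s). a \<in> A \<and> s \<in> acc a} \<and>
    (\<forall>a\<in>A. \<forall>s\<in>acc a. ((a,s) \<in> M \<longleftrightarrow> (\<forall>t. (a,t) \<in> M \<longrightarrow> \<not> apref a t s) \<and>
       (\<forall>p\<in>ptype a. card {b. (b,s) \<in> M \<and> p \<in> ptype b \<and> spref s b a} < cap s p)))"

end


context tapml begin

lemma G_unique:
  assumes GM: "G M" and GN: "G N"
  shows "M = N"
proof -
  have subM: "M \<subseteq> {(a,s). a \<in> A \<and> s \<in> acc a}" and subN: "N \<subseteq> {(a,s). a \<in> A \<and> s \<in> acc a}"
    using GM GN unfolding G_def by auto
  have eqM: "\<And>a s. a\<in>A \<Longrightarrow> s\<in>acc a \<Longrightarrow> ((a,s) \<in> M \<longleftrightarrow> (\<forall>t. (a,t) \<in> M \<longrightarrow> \<not> apref a t s) \<and>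
       (\<forall>p\<in>ptype a. card {b. (b,s) \<in> M \<and> p \<in> ptype b \<and> spref s b a} < cap s p))"
    using GM unfolding G_def by blast
  have eqN: "\<And>a s. a\<in>A \<Longrightarrow> s\<in>acc a \<Longrightarrow> ((a,s) \<in> N \<longleftrightarrow> (\<forall>t. (a,t) \<in> N \<longrightarrow> \<not> apref a t s) \<and>
       (\<forall>p\<in>ptype a. card {b. (b,s) \<in> N \<and> p \<in> ptype b \<and> spref s b a} < cap s p))"
    using GN unfolding G_def by blast
  have main: "\<forall>s a. idx ms s = n \<longrightarrow> a \<in> A \<longrightarrow> s \<in> acc a \<longrightarrow> ((a,s) \<in> M \<longleftrightarrow> (a,s) \<in> N)" for n
  proof (induction n rule: less_induct)
    case (less n)
    show ?case
    proof (intro allI impI)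
      fix s a0 assume sn: "idx ms s = n" and a0: "a0 \<in> A" "s \<in> acc a0"
      have sS: "s \<in> S" using a0 acc_S by auto
      note outerIH = less.IH
      have inner: "\<forall>a. idx (L s) a = m \<longrightarrow> a \<in> A \<longrightarrow> s \<in> acc a \<longrightarrow> ((a,s) \<in> M \<longleftrightarrow> (a,s) \<in> N)" for m
      proof (induction m rule: less_induct)
        case (less m)
        show ?case
        proof (intro allI impI)
          fix a assume am: "idx (L s) a = m" and a: "a \<in> A" "s \<in> acc a"
          have c1: "(\<forall>t. (a,t) \<in> M \<longrightarrow> \<not> apref a t s) \<longleftrightarrow> (\<forall>t. (a,t) \<in> N \<longrightarrow> \<not> apref a t s)"
          proof -
            have "(a,t) \<in> M \<longleftrightarrow> (a,t) \<in> N" if "apref a t s" "t \<in> acc a" for t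
              using outerIH[of "idx ms t"] apref_idx[OF a] that sn a by blast
            then show ?thesis using subM subN by blast
          qed
          have c2: "{b. (b,s) \<in> M \<and> p \<in> ptype b \<and> spref s b a} = {b. (b,s) \<in> N \<and> p \<in> ptype b \<and> spref s b a}" for p
          proof -
            have "(b,s) \<in> M \<longleftrightarrow> (b,s) \<in> N" if "spref s b a" "b \<in> A" "s \<in> acc b" for b
              using less.IH[of "idx (L s) b"] sp_pos[OF sS a that(2,3,1)] am that by blast
            then show ?thesis using subM subN by blast
          qed
          show "(a,s) \<in> M \<longleftrightarrow> (a,s) \<in> N" using eqM[OF a] eqN[OF a] c1 c2 by simp
        qed
      qed
      show "(a0,s) \<in> M \<longleftrightarrow> (a0,s) \<in> N" using inner a0 by blast
    qed
  qed
  show ?thesis using main subM subN by blast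
qed

end


context tapml begin

lemma Msub_fin: "M \<subseteq> {(a,s). a \<in> A \<and> s \<in> acc a} \<Longrightarrow> finite (Msub ptype M s p)"
  by (rule finite_subset[OF _ finA]) (auto simp: Msub_def)

lemma stable_G:
  assumes st: "stable A S P ptype acc apref cap spref N"
  shows "G N"
proof -
  have asg: "is_assignment A acc N" and capN: "\<forall>s\<in>S. \<forall>p\<in>P. card (Msub ptype N s p) \<le> cap s p"
    and nb: "\<And>a s. \<not> blocks A ptype acc apref cap spref N a s"
    using st unfolding stable_def is_matching_def by auto
  have sub: "N \<subseteq> {(a,s). a \<in> A \<and> s \<in> acc a}" using asg unfolding is_assignment_def by auto
  have uniq: "\<And>a s s'. (a,s) \<in> N \<Longrightarrow> (a,s') \<in> N \<Longrightarrow> s = s'" using asg unfolding is_assignment_def by blast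
  have "((a,s) \<in> N \<longleftrightarrow> (\<forall>t. (a,t) \<in> N \<longrightarrow> \<not> apref a t s) \<and>
       (\<forall>p\<in>ptype a. card {b. (b,s) \<in> N \<and> p \<in> ptype b \<and> spref s b a} < cap s p))"
    if a: "a \<in> A" "s \<in> acc a" for a s
  proof
    assume as: "(a,s) \<in> N"
    have sS: "s \<in> S" using a acc_S by auto
    have "\<forall>t. (a,t) \<in> N \<longrightarrow> \<not> apref a t s" using uniq as apref_idx[OF a a(2)] by blast
    moreover have "card {b. (b,s) \<in> N \<and> p \<in> ptype b \<and> spref s b a} < cap s p" if p: "p \<in> ptype a" for p
    proof -
      have pP: "p \<in> P" using p ptype_P a by auto
      have sub1: "{b. (b,s) \<in> N \<and> p \<in> ptype b \<and> spref s b a} \<subseteq> Msub ptype N s p - {a}"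
        using sp_irr[OF sS a] unfolding Msub_def by auto
      have fin: "finite (Msub ptype N s p)" using Msub_fin[OF sub] .
      have ain: "a \<in> Msub ptype N s p" using as p unfolding Msub_def by auto
      have "card {b. (b,s) \<in> N \<and> p \<in> ptype b \<and> spref s b a} \<le> card (Msub ptype N s p - {a})"
        using card_mono[OF _ sub1] fin by auto
      also have "\<dots> = card (Msub ptype N s p) - 1" using card_Diff_singleton[OF ain] .
      also have "\<dots> < cap s p"
      proof -
        have "card (Msub ptype N s p) \<le> cap s p" using capN sS pP by blast
        moreover have "card (Msub ptype N s p) > 0" using ain fin card_gt_0_iff by blast
        ultimately show ?thesis by linarith
      qed
      finally show ?thesis .
    qed
    ultimately show "(\<forall>t. (a,t) \<in> N \<longrightarrow> \<not> apref a t s) \<and>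
       (\<forall>p\<in>ptype a. card {b. (b,s) \<in> N \<and> p \<in> ptype b \<and> spref s b a} < cap s p)" by blast
  next
    assume h: "(\<forall>t. (a,t) \<in> N \<longrightarrow> \<not> apref a t s) \<and>
       (\<forall>p\<in>ptype a. card {b. (b,s) \<in> N \<and> p \<in> ptype b \<and> spref s b a} < cap s p)"
    show "(a,s) \<in> N"
    proof (rule ccontr)
      assume nas: "(a,s) \<notin> N"
      have sS: "s \<in> S" using a acc_S by auto
      have pref: "unassigned N a \<or> (\<exists>s'. (a,s') \<in> N \<and> apref a s s')"
      proof (cases "unassigned N a")
        case False
        then obtain s' where s': "(a,s') \<in> N" unfolding unassigned_def by auto
        then have s'acc: "s' \<in> acc a" using sub by auto
        have "s' \<noteq> s" using s' nas by auto
        moreover have "s \<in> set ms" "s' \<in> set ms" using acc_S[OF a(1)] a(2) s'acc ms_set by auto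
        ultimately have "idx ms s' \<noteq> idx ms s" using idx_inj by metis
        moreover have "\<not> apref a s' s" using h s' by auto
        moreover have "apref a s' s \<longleftrightarrow> idx ms s' < idx ms s" using apref_idx[OF a(1) a(2) s'acc] .
        moreover have "apref a s s' \<longleftrightarrow> idx ms s < idx ms s'" using apref_idx[OF a(1) s'acc a(2)] .
        ultimately have "apref a s s'" by linarith
        then show ?thesis using s' by auto
      qed auto
      have opt: "undersub ptype cap N s p \<or> (\<exists>b\<in>Msub ptype N s p. spref s a b)" if p: "p \<in> ptype a" for p
      proof (cases "undersub ptype cap N s p")
        case False
        define F where "F = {b. (b,s) \<in> N \<and> p \<in> ptype b \<and> spref s b a}"
        have "card F < cap s p" using h p unfolding F_def by auto
        also have "cap s p \<le> card (Msub ptype N s p)" using False unfolding undersub_def by auto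
        finally have lt: "card F < card (Msub ptype N s p)" .
        have "\<not> Msub ptype N s p \<subseteq> F"
        proof
          assume "Msub ptype N s p \<subseteq> F"
          moreover have "finite F" unfolding F_def by (rule finite_subset[OF _ Msub_fin[OF sub]]) (auto simp: Msub_def)
          ultimately have "card (Msub ptype N s p) \<le> card F" by (rule card_mono[rotated])
          then show False using lt by linarith
        qed
        then obtain b where b: "b \<in> Msub ptype N s p" "b \<notin> F" by blast
        then have bN: "(b,s) \<in> N" and "p \<in> ptype b" unfolding Msub_def by auto
        then have "\<not> spref s b a" using b(2) unfolding F_def by blast
        moreover have "b \<noteq> a" using bN nas by auto
        moreover have "b \<in> A" "s \<in> acc b" using bN sub by auto
        ultimately have "spref s a b" using sp_total[OF sS a(1) a(2) \<open>b \<in> A\<close> \<open>s \<in> acc b\<close>] by blast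
        then show ?thesis using b by auto
      qed simp
      obtain p1 p2 where pp: "p1 \<noteq> p2" "ptype a = {p1,p2}" using ptype2 a by blast
      have o1: "undersub ptype cap N s p1 \<or> (\<exists>b\<in>Msub ptype N s p1. spref s a b)" using opt pp by auto
      have o2: "undersub ptype cap N s p2 \<or> (\<exists>b\<in>Msub ptype N s p2. spref s a b)" using opt pp by auto
      have "blocks A ptype acc apref cap spref N a s"
      proof -
        have "(undersub ptype cap N s p1 \<and> undersub ptype cap N s p2) \<or>
         (undersub ptype cap N s p1 \<and> (\<exists>b\<in>Msub ptype N s p2. spref s a b)) \<or>
         (undersub ptype cap N s p2 \<and> (\<exists>b\<in>Msub ptype N s p1. spref s a b)) \<or>
         (\<exists>b\<in>Msub2 ptype N s p1 p2. spref s a b) \<or>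
         (\<exists>a1\<in>Msub ptype N s p1. \<exists>a2\<in>Msub ptype N s p2.
             a1 \<noteq> a2 \<and> spref s a a1 \<and> spref s a a2)"
        proof (cases "undersub ptype cap N s p1 \<or> undersub ptype cap N s p2")
          case True
          show ?thesis
          proof (cases "undersub ptype cap N s p1")
            case u1: True
            show ?thesis
            proof (cases "undersub ptype cap N s p2")
              case True then show ?thesis using u1 by (intro disjI1 conjI)
            next
              case False then have "\<exists>b\<in>Msub ptype N s p2. spref s a b" using o2 by simp
              then show ?thesis using u1 by (intro disjI2 disjI1 conjI)
            qed
          next
            case False
            then have u2: "undersub ptype cap N s p2" using True by simp
            have "\<exists>b\<in>Msub ptype N s p1. spref s a b" using o1 False by simp
            then show ?thesis using u2 by (intro disjI2 disjI1 conjI)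
          qed
        next
          case False
          then obtain b1 b2 where b1: "b1 \<in> Msub ptype N s p1" "spref s a b1"
            and b2: "b2 \<in> Msub ptype N s p2" "spref s a b2" using o1 o2 by blast
          show ?thesis
          proof (cases "b1 = b2")
            case True
            have "b1 \<in> A" using b1 sub unfolding Msub_def by auto
            then obtain q1 q2 where "ptype b1 = {q1,q2}" using ptype2 by blast
            moreover have "p1 \<in> ptype b1" "p2 \<in> ptype b1" using b1 b2 True unfolding Msub_def by auto
            ultimately have "ptype b1 = {p1,p2}" using pp(1) by auto
            then have "b1 \<in> Msub2 ptype N s p1 p2" using b1 unfolding Msub_def Msub2_def by auto
            then show ?thesis using b1 by blast
          next
            case False then show ?thesis using b1 b2 by blast
          qed
        qed
        note D = this
        show ?thesis unfolding blocks_def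
          apply (rule conjI, rule a(1), rule conjI, rule a(2), rule conjI, rule pref)
          apply (rule exI[of _ p1], rule exI[of _ p2])
          using pp D by blast
      qed
      then show False using nb by blast
    qed
  qed
  then show ?thesis unfolding G_def using sub by blast
qed

end


context tapml begin

lemma G_parts:
  assumes "G M"
  shows G_sub: "M \<subseteq> {(a,s). a \<in> A \<and> s \<in> acc a}"
    and G_eq: "\<And>a s. a\<in>A \<Longrightarrow> s\<in>acc a \<Longrightarrow> ((a,s) \<in> M \<longleftrightarrow> (\<forall>t. (a,t) \<in> M \<longrightarrow> \<not> apref a t s) \<and>
       (\<forall>p\<in>ptype a. card {b. (b,s) \<in> M \<and> p \<in> ptype b \<and> spref s b a} < cap s p))"
  using assms unfolding G_def by blast+

lemma G_uniq:
  assumes GM: "G M" and h: "(a,s) \<in> M" "(a,s') \<in> M"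
  shows "s = s'"
proof -
  have lt: "\<not> idx ms s < idx ms s'" if h: "(a,s) \<in> M" "(a,s') \<in> M" for s s'
  proof
    assume l: "idx ms s < idx ms s'"
    have a: "a \<in> A" "s \<in> acc a" "s' \<in> acc a" using h G_sub[OF GM] by auto
    have "apref a s s'" using apref_idx[OF a(1) a(3) a(2)] l by simp
    then show False using G_eq[OF GM a(1) a(3)] h by blast
  qed
  have "idx ms s = idx ms s'" using lt[OF h] lt[OF h(2,1)] by linarith
  moreover have "s \<in> set ms" "s' \<in> set ms" using h G_sub[OF GM] acc_S ms_set by auto
  ultimately show ?thesis using idx_inj by metis
qed

lemma G_cap:
  assumes GM: "G M" and sS: "s \<in> S"
  shows "card (Msub ptype M s p) \<le> cap s p"
proof (rule ccontr)
  assume n: "\<not> card (Msub ptype M s p) \<le> cap s p"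
  define X where "X = Msub ptype M s p"
  define xs where "xs = filter (\<lambda>b. b \<in> X) (L s)"
  define c where "c = cap s p"
  have sl: "distinct (L s)" "set (L s) = {a\<in>A. s \<in> acc a}" "sorted_wrt (spref s) (L s)"
    using school_lists sS by auto
  have XD: "X \<subseteq> set (L s)" using G_sub[OF GM] sl(2) unfolding X_def Msub_def by auto
  have setxs: "set xs = X" using XD unfolding xs_def by auto
  have dxs: "distinct xs" using sl(1) unfolding xs_def by simp
  have sxs: "sorted_wrt (spref s) xs" using sl(3) unfolding xs_def by (simp add: sorted_wrt_filter)
  have len: "length xs = card X" using distinct_card[OF dxs] setxs by simp
  have clt: "c < length xs" using n len unfolding X_def c_def by simp
  define y where "y = xs ! c"
  have yX: "y \<in> X" using clt setxs nth_mem unfolding y_def by blast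
  then have yM: "(y,s) \<in> M" "p \<in> ptype y" unfolding X_def Msub_def by auto
  then have ya: "y \<in> A" "s \<in> acc y" using G_sub[OF GM] by auto
  define B where "B = {b. (b,s) \<in> M \<and> p \<in> ptype b \<and> spref s b y}"
  have "card B < c" using G_eq[OF GM ya] yM unfolding B_def c_def by blast
  have TB: "set (take c xs) \<subseteq> B"
  proof
    fix b assume "b \<in> set (take c xs)"
    then obtain i where i: "i < c" "xs ! i = b" using clt by (auto simp: in_set_conv_nth)
    have "spref s (xs ! i) (xs ! c)" using sorted_wrt_nth_less[OF sxs i(1) clt] .
    moreover have "b \<in> X" using i clt setxs nth_mem by (metis less_trans)
    ultimately show "b \<in> B" using i unfolding B_def y_def X_def Msub_def by auto
  qed
  have finB: "finite B" unfolding B_def by (rule finite_subset[OF _ finA]) (use G_sub[OF GM] in auto)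
  have "card (set (take c xs)) = c" using distinct_card[of "take c xs"] dxs clt by simp
  then have "c \<le> card B" using card_mono[OF finB TB] by simp
  then show False using \<open>card B < c\<close> by simp
qed

lemma G_matching: "G M \<Longrightarrow> is_matching A S P ptype acc cap M"
  unfolding is_matching_def is_assignment_def
  using G_sub[of M] G_uniq[of M] G_cap[of M] by blast

lemma G_noblock:
  assumes GM: "G M"
  shows "\<not> blocks A ptype acc apref cap spref M a s"
proof
  assume bl: "blocks A ptype acc apref cap spref M a s"
  then have a: "a \<in> A" "s \<in> acc a" unfolding blocks_def by auto
  have sS: "s \<in> S" using a acc_S by auto
  have pref: "unassigned M a \<or> (\<exists>s'. (a, s') \<in> M \<and> apref a s s')" using bl unfolding blocks_def by blast
  obtain p1 p2 where pp: "p1 \<noteq> p2" "ptype a = {p1,p2}" and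
    D: "((undersub ptype cap M s p1 \<and> undersub ptype cap M s p2) \<or>
         (undersub ptype cap M s p1 \<and> (\<exists>b\<in>Msub ptype M s p2. spref s a b)) \<or>
         (undersub ptype cap M s p2 \<and> (\<exists>b\<in>Msub ptype M s p1. spref s a b)) \<or>
         (\<exists>b\<in>Msub2 ptype M s p1 p2. spref s a b) \<or>
         (\<exists>a1\<in>Msub ptype M s p1. \<exists>a2\<in>Msub ptype M s p2.
             a1 \<noteq> a2 \<and> spref s a a1 \<and> spref s a a2))"
    using bl unfolding blocks_def by blast
  have ss: "\<not> apref a s s" using apref_idx[OF a a(2)] by simp
  have nas: "(a,s) \<notin> M"
  proof
    assume "(a,s) \<in> M"
    then show False using pref G_uniq[OF GM] ss unfolding unassigned_def by blast
  qed
  have ne: "\<forall>t. (a,t) \<in> M \<longrightarrow> \<not> apref a t s"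
  proof (intro allI impI)
    fix t assume t: "(a,t) \<in> M"
    then have tacc: "t \<in> acc a" using G_sub[OF GM] by auto
    from pref t obtain s' where s': "(a,s') \<in> M" "apref a s s'" unfolding unassigned_def by blast
    have "t = s'" using G_uniq[OF GM t s'(1)] .
    then show "\<not> apref a t s" using s'(2) apref_idx[OF a tacc] apref_idx[OF a(1) tacc a(2)] by auto
  qed
  define F' where "F' = (\<lambda>p. {b. (b,s) \<in> M \<and> p \<in> ptype b \<and> spref s b a})"
  have iff: "(a,s) \<in> M \<longleftrightarrow> (\<forall>t. (a,t) \<in> M \<longrightarrow> \<not> apref a t s) \<and> (\<forall>p\<in>ptype a. card (F' p) < cap s p)"
    using G_eq[OF GM a] unfolding F'_def .
  have "\<not> (\<forall>p\<in>ptype a. card (F' p) < cap s p)" using iff nas ne by blast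
  then obtain p where p: "p \<in> ptype a" and big: "\<not> card (F' p) < cap s p" by blast
  define F where "F = F' p"
  have FM: "F \<subseteq> Msub ptype M s p" unfolding F_def F'_def Msub_def by auto
  have fin: "finite (Msub ptype M s p)" using Msub_fin[OF G_sub[OF GM]] .
  have pP: "p \<in> P" using p ptype_P a by auto
  have c1: "card (Msub ptype M s p) \<le> cap s p" using G_cap[OF GM sS] .
  have c2: "card (Msub ptype M s p) \<le> card F" using big c1 unfolding F_def by linarith
  have FeqM: "F = Msub ptype M s p" using card_subset_eq[OF fin FM] card_mono[OF fin FM] c2 by linarith
  have nu: "\<not> undersub ptype cap M s p" using big FeqM c1 unfolding undersub_def F_def by auto
  have np: "\<not> spref s a b" if "b \<in> Msub ptype M s p" for b
  proof -
    have "b \<in> F" using that FeqM by simp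
    then have "spref s b a" unfolding F_def F'_def by blast
    moreover have "b \<in> A" "s \<in> acc b" using that G_sub[OF GM] unfolding Msub_def by auto
    ultimately show ?thesis using sp_asym[OF sS _ _ a] by blast
  qed
  have m2: "Msub2 ptype M s p1 p2 \<subseteq> Msub ptype M s p" using p pp unfolding Msub_def Msub2_def by auto
  have noex: "\<not> (\<exists>b\<in>Msub ptype M s p. spref s a b)" using np by blast
  have m2': "\<not> (\<exists>b\<in>Msub2 ptype M s p1 p2. spref s a b)" using noex m2 by blast
  have "p = p1 \<or> p = p2" using p pp by auto
  then show False
  proof
    assume e: "p = p1"
    have n1: "\<not> undersub ptype cap M s p1" using nu e by simp
    have n2: "\<not> (\<exists>b\<in>Msub ptype M s p1. spref s a b)" using noex e by simp
    have n3: "\<not> (\<exists>a1\<in>Msub ptype M s p1. \<exists>a2\<in>Msub ptype M s p2.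
             a1 \<noteq> a2 \<and> spref s a a1 \<and> spref s a a2)" using n2 by blast
    show False using D n1 n2 n3 m2' by argo
  next
    assume e: "p = p2"
    have n1: "\<not> undersub ptype cap M s p2" using nu e by simp
    have n2: "\<not> (\<exists>b\<in>Msub ptype M s p2. spref s a b)" using noex e by simp
    have n3: "\<not> (\<exists>a1\<in>Msub ptype M s p1. \<exists>a2\<in>Msub ptype M s p2.
             a1 \<noteq> a2 \<and> spref s a a1 \<and> spref s a a2)" using n2 by blast
    show False using D n1 n2 n3 m2' by argo
  qed
qed

end


context tapml begin

definition Cnd :: "('a \<times> 's) set \<Rightarrow> 'a \<Rightarrow> 's \<Rightarrow> bool" where
  "Cnd M a s \<longleftrightarrow> (\<forall>t. (a,t) \<in> M \<longrightarrow> \<not> apref a t s) \<and>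
       (\<forall>p\<in>ptype a. card {b. (b,s) \<in> M \<and> p \<in> ptype b \<and> spref s b a} < cap s p)"

definition Inv :: "nat \<Rightarrow> ('a \<times> 's) set \<Rightarrow> bool" where
  "Inv k M \<longleftrightarrow> (\<forall>x\<in>M. fst x \<in> A \<and> snd x \<in> acc (fst x) \<and> snd x \<in> set (take k ms)) \<and>
     (\<forall>s\<in>set (take k ms). \<forall>a\<in>A. s \<in> acc a \<longrightarrow> ((a,s) \<in> M \<longleftrightarrow> Cnd M a s))"

lemma Inv_step:
  assumes I: "Inv k M" and k: "k < length ms"
  shows "Inv (Suc k) (dsd_school ptype cap (ms!k) (L (ms!k)) M)"
proof -
  define s where "s = ms ! k"
  define M' where "M' = dsd_school ptype cap s (L s) M"
  have sS: "s \<in> S" using k ms_set unfolding s_def by auto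
  have idxs: "idx ms s = k" using idx_nth[OF ms_dist k] unfolding s_def .
  have snot: "s \<notin> set (take k ms)" using idx_take[OF ms_dist] idxs by blast
  have tk: "set (take (Suc k) ms) = insert s (set (take k ms))"
    using k unfolding s_def by (simp add: take_Suc_conv_app_nth)
  have sl: "distinct (L s)" "set (L s) = {a\<in>A. s \<in> acc a}" "sorted_wrt (spref s) (L s)"
    using school_lists sS by auto
  have Ia: "\<forall>x\<in>M. fst x \<in> A \<and> snd x \<in> acc (fst x) \<and> snd x \<in> set (take k ms)"
    and Ib: "\<forall>s\<in>set (take k ms). \<forall>a\<in>A. s \<in> acc a \<longrightarrow> ((a,s) \<in> M \<longleftrightarrow> Cnd M a s)"
    using I unfolding Inv_def by auto
  have noS: "\<forall>b. (b,s)\<in>M \<longrightarrow> b\<notin>set (L s) \<and> (\<forall>a\<in>set (L s). spref s b a)"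
    using Ia snot by fastforce
  have asym: "\<forall>a\<in>set (L s). \<forall>b\<in>set (L s). spref s a b \<longrightarrow> \<not> spref s b a"
    using sp_asym[OF sS] sl(2) by blast
  have char: "M' = M \<union> {(a,s)|a. a\<in>set (L s) \<and> unassigned M a \<and>
     (\<forall>p\<in>ptype a. card {b. (b,s)\<in>M' \<and> p\<in>ptype b \<and> spref s b a} < cap s p)}"
    unfolding M'_def by (rule school_char[OF sl(1) sl(3) asym noS])
  have a': "\<forall>x\<in>M'. fst x \<in> A \<and> snd x \<in> acc (fst x) \<and> snd x \<in> set (take (Suc k) ms)"
  proof
    fix x assume "x \<in> M'"
    then have "x \<in> M \<or> (fst x \<in> set (L s) \<and> snd x = s)" using char by auto
    then show "fst x \<in> A \<and> snd x \<in> acc (fst x) \<and> snd x \<in> set (take (Suc k) ms)"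
      using Ia sl(2) tk by auto
  qed
  have b': "(a,s') \<in> M' \<longleftrightarrow> Cnd M' a s'" if s': "s' \<in> set (take (Suc k) ms)" and a: "a \<in> A" "s' \<in> acc a" for s' a
  proof (cases "s' = s")
    case False
    then have s'k: "s' \<in> set (take k ms)" using s' tk by auto
    have i': "idx ms s' < k" using idx_take[OF ms_dist s'k] .
    have e1: "(a,s') \<in> M' \<longleftrightarrow> (a,s') \<in> M" using char False by auto
    have e2: "{b. (b,s') \<in> M' \<and> p \<in> ptype b \<and> spref s' b a} = {b. (b,s') \<in> M \<and> p \<in> ptype b \<and> spref s' b a}" for p
      using char False by auto
    have e3: "(\<forall>t. (a,t) \<in> M' \<longrightarrow> \<not> apref a t s') \<longleftrightarrow> (\<forall>t. (a,t) \<in> M \<longrightarrow> \<not> apref a t s')"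
    proof
      assume h: "\<forall>t. (a,t) \<in> M' \<longrightarrow> \<not> apref a t s'"
      show "\<forall>t. (a,t) \<in> M \<longrightarrow> \<not> apref a t s'" using h char by blast
    next
      assume h: "\<forall>t. (a,t) \<in> M \<longrightarrow> \<not> apref a t s'"
      show "\<forall>t. (a,t) \<in> M' \<longrightarrow> \<not> apref a t s'"
      proof (intro allI impI)
        fix t assume t: "(a,t) \<in> M'"
        show "\<not> apref a t s'"
        proof (cases "(a,t) \<in> M")
          case True then show ?thesis using h by blast
        next
          case False
          then have "t = s" "a \<in> set (L s)" using t char by auto
          then have "s \<in> acc a" using sl(2) by auto
          then show ?thesis using apref_idx[OF a(1) a(2) \<open>s \<in> acc a\<close>] \<open>t = s\<close> idxs i' by simp
        qed
      qed
    qed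
    have "Cnd M' a s' \<longleftrightarrow> Cnd M a s'" unfolding Cnd_def using e2 e3 by simp
    then show ?thesis using e1 Ib s'k a by blast
  next
    case True
    have ain: "a \<in> set (L s)" using a sl(2) True by auto
    have e1: "(a,s) \<in> M' \<longleftrightarrow> unassigned M a \<and>
     (\<forall>p\<in>ptype a. card {b. (b,s)\<in>M' \<and> p\<in>ptype b \<and> spref s b a} < cap s p)"
    proof -
      have "(a,s) \<notin> M" using snot Ia by fastforce
      then show ?thesis using char ain by auto
    qed
    have e2: "unassigned M a \<longleftrightarrow> (\<forall>t. (a,t) \<in> M' \<longrightarrow> \<not> apref a t s)"
    proof
      assume u: "unassigned M a"
      show "\<forall>t. (a,t) \<in> M' \<longrightarrow> \<not> apref a t s"
      proof (intro allI impI)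
        fix t assume "(a,t) \<in> M'"
        then have "t = s" using u char unfolding unassigned_def by auto
        then show "\<not> apref a t s" using apref_idx[OF a(1) a(2) a(2)] True by simp
      qed
    next
      assume h: "\<forall>t. (a,t) \<in> M' \<longrightarrow> \<not> apref a t s"
      show "unassigned M a"
        unfolding unassigned_def
      proof (intro allI notI)
        fix t assume t: "(a,t) \<in> M"
        then have tk': "t \<in> set (take k ms)" "t \<in> acc a" using Ia by auto
        have "idx ms t < k" using idx_take[OF ms_dist tk'(1)] .
        then have "apref a t s" using apref_idx[OF a(1) _ tk'(2)] a(2) True idxs by simp
        moreover have "(a,t) \<in> M'" using t char by auto
        ultimately show False using h by blast
      qed
    qed
    show ?thesis using e1 e2 True unfolding Cnd_def by simp
  qed
  show ?thesis unfolding Inv_def s_def[symmetric] M'_def[symmetric] using a' b' by blast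
qed

lemma Inv_all: "k \<le> length ms \<Longrightarrow> Inv k (foldl (\<lambda>M s. dsd_school ptype cap s (L s) M) {} (take k ms))"
proof (induction k)
  case 0
  then show ?case unfolding Inv_def by simp
next
  case (Suc k)
  then have k: "k < length ms" by simp
  have "take (Suc k) ms = take k ms @ [ms ! k]" using k by (simp add: take_Suc_conv_app_nth)
  then show ?case using Inv_step[OF Suc.IH[OF less_imp_le[OF k]] k] by simp
qed

lemma dsd_G: "G (dsd ptype cap L ms)"
proof -
  have I: "Inv (length ms) (dsd ptype cap L ms)" using Inv_all[of "length ms"] unfolding dsd_def by simp
  have tm: "set (take (length ms) ms) = S" using ms_set by simp
  have Ia: "\<forall>x\<in>dsd ptype cap L ms. fst x \<in> A \<and> snd x \<in> acc (fst x)"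
    and Ib: "\<forall>s\<in>S. \<forall>a\<in>A. s \<in> acc a \<longrightarrow> ((a,s) \<in> dsd ptype cap L ms \<longleftrightarrow> Cnd (dsd ptype cap L ms) a s)"
    using I unfolding Inv_def tm by auto
  have sub: "dsd ptype cap L ms \<subseteq> {(a,s). a \<in> A \<and> s \<in> acc a}" using Ia by auto
  have "\<forall>a\<in>A. \<forall>s\<in>acc a. ((a,s) \<in> dsd ptype cap L ms \<longleftrightarrow> Cnd (dsd ptype cap L ms) a s)"
    using Ib acc_S by blast
  then show ?thesis unfolding G_def Cnd_def using sub by blast
qed

theorem main_tap: "{M. stable A S P ptype acc apref cap spref M} = {dsd ptype cap L ms}"
proof -
  have st: "stable A S P ptype acc apref cap spref (dsd ptype cap L ms)"
    unfolding stable_def using G_matching[OF dsd_G] G_noblock[OF dsd_G] by blast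
  have "N = dsd ptype cap L ms" if "stable A S P ptype acc apref cap spref N" for N
    using G_unique[OF stable_G[OF that] dsd_G] .
  then show ?thesis using st by blast
qed

end


theorem theorem3:
  fixes A :: "'a set" and S :: "'s set" and P :: "'p set"
    and ptype :: "'a \<Rightarrow> 'p set" and acc :: "'a \<Rightarrow> 's set"
    and apref :: "'a \<Rightarrow> 's \<Rightarrow> 's \<Rightarrow> bool" and cap :: "'s \<Rightarrow> 'p \<Rightarrow> nat"
    and spref :: "'s \<Rightarrow> 'a \<Rightarrow> 'a \<Rightarrow> bool"
    and ms :: "'s list" and L :: "'s \<Rightarrow> 'a list"
  assumes inst: "tap_instance A S P ptype acc apref cap spref"
    and ms_enum: "distinct ms" "set ms = S"
    and master: "\<forall>a\<in>A. \<forall>s\<in>acc a. \<forall>s'\<in>acc a.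
                   apref a s s' \<longleftrightarrow> (\<exists>i j. i < j \<and> j < length ms \<and> ms ! i = s \<and> ms ! j = s')"
    and school_lists: "\<forall>s\<in>S. distinct (L s) \<and> set (L s) = {a\<in>A. s \<in> acc a}
                          \<and> sorted_wrt (spref s) (L s)"
  shows "{M. stable A S P ptype acc apref cap spref M} = {dsd ptype cap L ms}"
proof -
  interpret tapml A S P ptype acc apref cap spref ms L
    using assms by unfold_locales auto
  show ?thesis by (rule main_tap)
qed

end
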